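(* Let $H$ be a real Hilbert space, $A$ a strictly positive selfadjoint operator on $H$ with $\lambda_1>0$ the minimum of its spectrum, $\alpha,\beta,\gamma,\kappa>0$ with $\mu=\gamma-\alpha\beta\ge0$, and $\eta\in\mathbb R$. Let $(u,\theta)$ be a sufficiently regular solution (e.g. with initial datum in the domain of the generator) of $$u_{ttt}+\alpha u_{tt}+\beta A u_t+\gamma A u=\eta A\theta,\qquad \theta_t+\kappa A\theta=-\eta A u_{tt}-\alpha\eta A u_t,$$ and set $\mathsf G(t)=-\langle u_t(t)-\alpha u(t),u_{tt}(t)+\alpha u_t(t)\rangle$. Then $$\frac{d}{dt}\mathsf G+\frac{\gamma}{2\alpha}\|u_t+\alpha u\|_1^2+\frac12\|u_{tt}+\alpha u_t\|^2\le \ell\|u_t\|_1^2+\eta\langle\theta,u_t+\alpha u\rangle_1-2\eta\langle\theta,u_t\rangle_1,$$ where $\ell=\frac{4\gamma^2+\mu^2}{2\alpha\gamma}+\frac{2\alpha^2}{\lambda_1}$.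
   Context: $\|u\|_\sigma=\|A^{\sigma/2}u\|$ and $\langle u,v\rangle_\sigma=\langle A^{\sigma/2}u,A^{\sigma/2}v\rangle$ for $\sigma\in\mathbb R$; $\langle\cdot,\cdot\rangle,\|\cdot\|$ are the inner product and norm of $H$. *)

theory Defs
  imports "HOL-Analysis.Analysis"
begin

text \<open>Possibly unbounded linear operators on a real Hilbert space H, given as a
  map T together with its domain D.\<close>

definition linear_op :: "'a::real_inner set \<Rightarrow> ('a \<Rightarrow> 'a) \<Rightarrow> bool" where
  "linear_op D T \<longleftrightarrow> subspace D \<and>
     (\<forall>x\<in>D. \<forall>y\<in>D. T (x + y) = T x + T y) \<and>
     (\<forall>c. \<forall>x\<in>D. T (c *\<^sub>R x) = c *\<^sub>R T x)"

text \<open>Selfadjoint: densely defined, symmetric, and the domain of the adjoint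
  is contained in (hence equal to) the domain of T.\<close>
definition selfadjoint_op :: "'a::real_inner set \<Rightarrow> ('a \<Rightarrow> 'a) \<Rightarrow> bool" where
  "selfadjoint_op D T \<longleftrightarrow> linear_op D T \<and> closure D = UNIV \<and>
     (\<forall>x\<in>D. \<forall>y\<in>D. inner (T x) y = inner x (T y)) \<and>
     (\<forall>y. (\<exists>z. \<forall>x\<in>D. inner (T x) y = inner x z) \<longrightarrow> y \<in> D)"

definition positive_op :: "'a::real_inner set \<Rightarrow> ('a \<Rightarrow> 'a) \<Rightarrow> bool" where
  "positive_op D T \<longleftrightarrow> (\<forall>x\<in>D. inner (T x) x \<ge> 0)"

definition strictly_positive_op :: "'a::real_inner set \<Rightarrow> ('a \<Rightarrow> 'a) \<Rightarrow> bool" where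
  "strictly_positive_op D T \<longleftrightarrow> (\<forall>x\<in>D. x \<noteq> 0 \<longrightarrow> inner (T x) x > 0)"

definition op_spectrum :: "'a::real_inner set \<Rightarrow> ('a \<Rightarrow> 'a) \<Rightarrow> real set" where
  "op_spectrum D T = {l. \<not> (bij_betw (\<lambda>x. T x - l *\<^sub>R x) D UNIV \<and>
       (\<exists>C. \<forall>x\<in>D. norm x \<le> C * norm (T x - l *\<^sub>R x)))}"

definition is_op_square :: "'a set \<Rightarrow> ('a \<Rightarrow> 'a) \<Rightarrow> 'a set \<Rightarrow> ('a \<Rightarrow> 'a) \<Rightarrow> bool" where
  "is_op_square DA A DB B \<longleftrightarrow> DA = {x\<in>DB. B x \<in> DB} \<and> (\<forall>x\<in>DA. A x = B (B x))"

end

theory Submission imports Defs begin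

lemma disc_aux:
  fixes p r :: real
  assumes "\<forall>t. 0 \<le> p - 2 * t + t\<^sup>2 * r" "0 \<le> p"
  shows "1 \<le> p*r"
proof (cases "r > 0")
  case True
  have "0 \<le> p - 2*(1/r) + (1/r)^2*r" using assms(1) by blast
  also have "\<dots> = p - 1/r" using True by (simp add: power2_eq_square field_simps)
  finally show ?thesis using True by (simp add: field_simps)
next
  case False
  have "0 \<le> p - 2*(p+1) + (p+1)^2*r" using assms(1) by blast
  moreover have "(p+1)^2*r \<le> 0" using False by (simp add: mult_nonneg_nonpos)
  ultimately have False using assms(2) by (smt (verit))
  then show ?thesis ..
qed

lemma spec_lb:
  fixes DA :: "'a::real_inner set" and A :: "'a \<Rightarrow> 'a"
  assumes sa: "selfadjoint_op DA A" and pos: "strictly_positive_op DA A"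
    and lmin: "\<forall>l\<in>op_spectrum DA A. lam1 \<le> l" and x: "x \<in> DA"
  shows "lam1 * (norm x)^2 \<le> inner (A x) x"
proof (cases "x = 0")
  case True
  have "subspace DA" "\<forall>c. \<forall>x\<in>DA. A (c *\<^sub>R x) = c *\<^sub>R A x"
    using sa unfolding selfadjoint_op_def linear_op_def by auto
  then have "A 0 = 0" by (metis scaleR_zero_left subspace_0)
  then show ?thesis using True by simp
next
  case False
  have sub: "subspace DA" and add: "\<forall>x\<in>DA. \<forall>y\<in>DA. A (x + y) = A x + A y"
    and scl: "\<forall>c. \<forall>x\<in>DA. A (c *\<^sub>R x) = c *\<^sub>R A x"
    and sym: "\<forall>x\<in>DA. \<forall>y\<in>DA. inner (A x) y = inner x (A y)"
    using sa unfolding selfadjoint_op_def linear_op_def by auto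
  have Adiff: "A (a - s *\<^sub>R b) = A a - s *\<^sub>R A b" if "a \<in> DA" "b \<in> DA" for a b s
  proof -
    have "(-s) *\<^sub>R b \<in> DA" using sub that by (simp only: subspace_scale)
    then have "A (a + (-s) *\<^sub>R b) = A a + A ((-s) *\<^sub>R b)"
      using add that by blast
    then show ?thesis using scl that by (metis add_uminus_conv_diff scaleR_minus_left)
  qed
  define S where "S = {inner (A y) y | y. y \<in> DA \<and> norm y = 1}"
  have nonneg: "\<forall>y\<in>DA. 0 \<le> inner (A y) y"
    using pos unfolding strictly_positive_op_def
    by (metis inner_zero_right less_eq_real_def)
  have xn: "(1 / norm x) *\<^sub>R x \<in> DA" using sub x by (simp add: subspace_scale)
  have "inner (A ((1 / norm x) *\<^sub>R x)) ((1 / norm x) *\<^sub>R x) \<in> S"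
    unfolding S_def using xn False by (intro CollectI exI[of _ "(1 / norm x) *\<^sub>R x"]) simp
  then have Sne: "S \<noteq> {}" by blast
  have Sbdd: "bdd_below S" by (rule bdd_belowI[of _ 0]) (use nonneg in \<open>auto simp: S_def\<close>)
  define m where "m = Inf S"
  have Qpos: "m * (norm y)^2 \<le> inner (A y) y" if y: "y \<in> DA" for y
  proof (cases "y = 0")
    case True then show ?thesis using nonneg y by simp
  next
    case False
    define z where "z = (1 / norm y) *\<^sub>R y"
    have z: "z \<in> DA" "norm z = 1" using sub y False by (auto simp: z_def subspace_scale)
    have "inner (A z) z = inner (A y) y / (norm y)^2"
      using scl y by (simp add: z_def power2_eq_square)
    moreover have "m \<le> inner (A z) z" unfolding m_def
      by (rule cInf_lower) (use z Sbdd in \<open>auto simp: S_def\<close>)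
    ultimately have "m \<le> inner (A y) y / (norm y)^2" by linarith
    moreover have "(norm y)^2 > 0" using False by simp
    ultimately show ?thesis by (metis pos_le_divide_eq)
  qed
  have "lam1 \<le> m"
  proof (rule ccontr)
    assume "\<not> lam1 \<le> m"
    then have "m \<notin> op_spectrum DA A" using lmin by force
    then have "bij_betw (\<lambda>x. A x - m *\<^sub>R x) DA UNIV \<and>
       (\<exists>C. \<forall>x\<in>DA. norm x \<le> C * norm (A x - m *\<^sub>R x))"
      unfolding op_spectrum_def by simp
    then obtain C where bij: "bij_betw (\<lambda>x. A x - m *\<^sub>R x) DA UNIV"
      and C: "\<forall>x\<in>DA. norm x \<le> C * norm (A x - m *\<^sub>R x)"
      by blast
    have key: "1 \<le> (inner (A z) z - m) * \<bar>C\<bar>" if z: "z \<in> DA" "norm z = 1" for z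
    proof -
      have "z \<in> (\<lambda>x. A x - m *\<^sub>R x) ` DA"
        using bij_betw_imp_surj_on[OF bij] by simp
      then obtain y where y: "y \<in> DA" "A y - m *\<^sub>R y = z" by (auto simp del: image_iff)
      define p where "p = inner (A z) z - m * inner z z"
      define q where "q = inner (A z) y - m * inner z y"
      define r where "r = inner (A y) y - m * inner y y"
      have q1: "q = 1"
      proof -
        have "inner (A z) y = inner z (A y)" using sym z(1) y(1) by blast
        then have "q = inner z (A y) - m * inner z y" by (simp add: q_def)
        also have "\<dots> = inner z (A y - m *\<^sub>R y)" by (simp add: inner_diff_right)
        also have "\<dots> = 1" using y(2) z(2) by (simp add: dot_square_norm)
        finally show ?thesis .
      qed
      have rle: "r \<le> \<bar>C\<bar>"
      proof -
        have "r = inner (A y - m *\<^sub>R y) y" by (simp add: r_def inner_diff_left)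
        also have "\<dots> = inner z y" using y by simp
        also have "\<dots> \<le> norm z * norm y" by (rule norm_cauchy_schwarz)
        also have "\<dots> = norm y" using z by simp
        also have "\<dots> \<le> C * norm (A y - m *\<^sub>R y)" using C y(1) by blast
        also have "\<dots> = C * norm z" using y(2) by simp
        finally show ?thesis using z by simp
      qed
      have "\<forall>t. 0 \<le> p - 2 * t + t\<^sup>2 * r"
      proof
        fix s
        have w: "z - s *\<^sub>R y \<in> DA" using sub z y by (simp add: subspace_diff subspace_scale)
        have "0 \<le> inner (A (z - s *\<^sub>R y)) (z - s *\<^sub>R y) - m * (norm (z - s *\<^sub>R y))^2"
          using Qpos[OF w] by simp
        also have "\<dots> = p - 2 * s * q + s^2 * r"
        proof -
          have e1: "inner (A y) z = inner (A z) y"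
          proof -
            have "inner (A y) z = inner y (A z)" using sym z(1) y(1) by blast
            then show ?thesis by (simp only: inner_commute)
          qed
          have e2: "inner (A (z - s *\<^sub>R y)) (z - s *\<^sub>R y) =
             inner (A z) z - s * inner (A z) y - s * inner (A y) z + s^2 * inner (A y) y"
            unfolding Adiff[OF z(1) y(1)] by (simp add: inner_diff_left inner_diff_right power2_eq_square algebra_simps)
          have e3: "(norm (z - s *\<^sub>R y))^2 = inner z z - 2 * s * inner z y + s^2 * inner y y"
            unfolding power2_norm_eq_inner by (simp add: inner_diff_left inner_diff_right power2_eq_square inner_commute)
          show ?thesis unfolding e2 e3 e1 p_def q_def r_def by (simp add: algebra_simps)
        qed
        finally show "0 \<le> p - 2 * s + s\<^sup>2 * r" using q1 by simp
      qed
      have zz: "inner z z = 1" using z(2) by (simp add: dot_square_norm)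
      have pe: "p = inner (A z) z - m" by (simp only: p_def zz mult_1_right)
      have "\<forall>t. 0 \<le> p - 2 * t + t\<^sup>2 * r" by fact
      moreover have "0 \<le> p" using Qpos[OF z(1)] z(2) pe by simp
      ultimately have "1 \<le> p * r" by (rule disc_aux)
      also have "\<dots> \<le> p * \<bar>C\<bar>" using rle \<open>0 \<le> p\<close> by (simp add: mult_left_mono)
      finally show ?thesis using pe by simp
    qed
    have "Inf S < m + 1 / (\<bar>C\<bar> + 1)" unfolding m_def by simp
    then obtain v where "v \<in> S" "v < m + 1 / (\<bar>C\<bar> + 1)" using cInf_lessD[OF Sne] by blast
    then obtain z where z: "z \<in> DA" "norm z = 1" "inner (A z) z < m + 1 / (\<bar>C\<bar> + 1)"
      unfolding S_def by blast
    have k: "1 \<le> (inner (A z) z - m) * \<bar>C\<bar>" using key z by blast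
    have "(inner (A z) z - m) * \<bar>C\<bar> \<le> (1 / (\<bar>C\<bar> + 1)) * \<bar>C\<bar>"
      using z(3) by (intro mult_right_mono) auto
    also have "\<dots> < 1" by (simp add: field_simps)
    finally show False using k by simp
  qed
  then show ?thesis using Qpos[OF x] nonneg x
    by (meson mult_right_mono order_trans zero_le_power2)
qed


lemma final_ineq:
  fixes \<alpha> \<beta> \<gamma> \<eta> lam1 a b c P PQ Qn pr qr G' :: real
  assumes pos: "\<alpha> > 0" "\<gamma> > 0" "lam1 > 0"
    and h1: "0 \<le> a - 2 * \<alpha> * b + \<alpha>\<^sup>2 * c"
    and h2: "lam1 * c \<le> P"
    and h3: "0 \<le> Qn - 2 * k * PQ + k\<^sup>2 * P"
    and k: "k = (2 * \<gamma> - \<alpha> * \<beta>) / (\<alpha> * \<gamma>)"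
    and G: "G' = - (a - \<alpha>\<^sup>2 * c) - (\<eta> * (pr - \<alpha> * qr) - \<beta> * (P - \<alpha> * PQ) - \<gamma> * (PQ - \<alpha> * Qn))"
  shows "G' + \<gamma> / (2 * \<alpha>) * (P + 2 * \<alpha> * PQ + \<alpha>\<^sup>2 * Qn) + 1 / 2 * (a + 2 * \<alpha> * b + \<alpha>\<^sup>2 * c)
     \<le> ((4 * \<gamma>\<^sup>2 + (\<gamma> - \<alpha> * \<beta>)\<^sup>2) / (2 * \<alpha> * \<gamma>) + 2 * \<alpha>\<^sup>2 / lam1) * P + \<eta> * (pr + \<alpha> * qr) - 2 * \<eta> * pr"
proof -
  have id: "((4 * \<gamma>\<^sup>2 + (\<gamma> - \<alpha> * \<beta>)\<^sup>2) / (2 * \<alpha> * \<gamma>) + 2 * \<alpha>\<^sup>2 / lam1) * P + \<eta> * (pr + \<alpha> * qr) - 2 * \<eta> * pr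
     - (G' + \<gamma> / (2 * \<alpha>) * (P + 2 * \<alpha> * PQ + \<alpha>\<^sup>2 * Qn) + 1 / 2 * (a + 2 * \<alpha> * b + \<alpha>\<^sup>2 * c))
     = (\<alpha> * \<gamma> / 2) * (Qn - 2 * k * PQ + k\<^sup>2 * P) + 1 / 2 * (a - 2 * \<alpha> * b + \<alpha>\<^sup>2 * c)
       + (2 * \<alpha>\<^sup>2 / lam1) * (P - lam1 * c)"
    using pos unfolding G k by (simp add: field_simps power2_eq_square)
  have "0 \<le> (\<alpha> * \<gamma> / 2) * (Qn - 2 * k * PQ + k\<^sup>2 * P)" using pos h3 by simp
  moreover have "0 \<le> (2 * \<alpha>\<^sup>2 / lam1) * (P - lam1 * c)" using pos h2 by simp
  ultimately have "0 \<le> (\<alpha> * \<gamma> / 2) * (Qn - 2 * k * PQ + k\<^sup>2 * P) + 1 / 2 * (a - 2 * \<alpha> * b + \<alpha>\<^sup>2 * c)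
       + (2 * \<alpha>\<^sup>2 / lam1) * (P - lam1 * c)" using h1 by simp
  then show ?thesis unfolding id[symmetric] by simp
qed

theorem lemma7p3:
  fixes DA :: "'a::{real_inner, complete_space} set" and A :: "'a \<Rightarrow> 'a"
    and DB :: "'a set" and B :: "'a \<Rightarrow> 'a"
    and \<alpha> \<beta> \<gamma> \<kappa> \<eta> lam1 :: real
    and u u1 u2 u3 \<theta> \<theta>1 :: "real \<Rightarrow> 'a"
  assumes A_sa: "selfadjoint_op DA A" and A_pos: "strictly_positive_op DA A"
    and lam1_min: "lam1 \<in> op_spectrum DA A" "\<forall>l\<in>op_spectrum DA A. lam1 \<le> l" and lam1_pos: "lam1 > 0"
    and B_sqrt: "selfadjoint_op DB B" "positive_op DB B" "is_op_square DA A DB B"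
    and params: "\<alpha> > 0" "\<beta> > 0" "\<gamma> > 0" "\<kappa> > 0" "\<gamma> - \<alpha> * \<beta> \<ge> 0"
    and du: "\<forall>t\<ge>0. (u has_vector_derivative u1 t) (at t within {0..})"
    and du1: "\<forall>t\<ge>0. (u1 has_vector_derivative u2 t) (at t within {0..})"
    and du2: "\<forall>t\<ge>0. (u2 has_vector_derivative u3 t) (at t within {0..})"
    and d\<theta>: "\<forall>t\<ge>0. (\<theta> has_vector_derivative \<theta>1 t) (at t within {0..})"
    and dom: "\<forall>t\<ge>0. u t \<in> DA \<and> u1 t \<in> DA \<and> u2 t \<in> DA \<and> \<theta> t \<in> DA"
    and eq1: "\<forall>t\<ge>0. u3 t + \<alpha> *\<^sub>R u2 t + \<beta> *\<^sub>R A (u1 t) + \<gamma> *\<^sub>R A (u t) = \<eta> *\<^sub>R A (\<theta> t)"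
    and eq2: "\<forall>t\<ge>0. \<theta>1 t + \<kappa> *\<^sub>R A (\<theta> t) = - (\<eta> *\<^sub>R A (u2 t)) - (\<alpha> * \<eta>) *\<^sub>R A (u1 t)"
  shows "\<forall>t\<ge>0. \<exists>G'.
     ((\<lambda>s. - inner (u1 s - \<alpha> *\<^sub>R u s) (u2 s + \<alpha> *\<^sub>R u1 s)) has_real_derivative G') (at t within {0..}) \<and>
     G' + \<gamma> / (2 * \<alpha>) * (norm (B (u1 t + \<alpha> *\<^sub>R u t)))\<^sup>2 + 1 / 2 * (norm (u2 t + \<alpha> *\<^sub>R u1 t))\<^sup>2
       \<le> ((4 * \<gamma>\<^sup>2 + (\<gamma> - \<alpha> * \<beta>)\<^sup>2) / (2 * \<alpha> * \<gamma>) + 2 * \<alpha>\<^sup>2 / lam1) * (norm (B (u1 t)))\<^sup>2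
         + \<eta> * inner (B (\<theta> t)) (B (u1 t + \<alpha> *\<^sub>R u t)) - 2 * \<eta> * inner (B (\<theta> t)) (B (u1 t))"
proof (intro allI impI)
  fix t :: real assume t: "t \<ge> 0"
  have subA: "subspace DA" and symA: "\<forall>x\<in>DA. \<forall>y\<in>DA. inner (A x) y = inner x (A y)"
    using A_sa unfolding selfadjoint_op_def linear_op_def by auto
  have subB: "subspace DB" and addB: "\<forall>x\<in>DB. \<forall>y\<in>DB. B (x + y) = B x + B y"
    and sclB: "\<forall>c. \<forall>x\<in>DB. B (c *\<^sub>R x) = c *\<^sub>R B x"
    and symB: "\<forall>x\<in>DB. \<forall>y\<in>DB. inner (B x) y = inner x (B y)"
    using B_sqrt(1) unfolding selfadjoint_op_def linear_op_def by auto
  have DAB: "DA = {x\<in>DB. B x \<in> DB}" and AB: "\<forall>x\<in>DA. A x = B (B x)"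
    using B_sqrt(3) unfolding is_op_square_def by auto
  have IA: "inner x (A y) = inner (B x) (B y)" if "x \<in> DA" "y \<in> DA" for x y
  proof -
    have "x \<in> DB" "B y \<in> DB" using that DAB by auto
    then have "inner (B x) (B y) = inner x (B (B y))" using symB by blast
    then show ?thesis using AB that(2) by simp
  qed
  have Blin: "B (x + c *\<^sub>R y) = B x + c *\<^sub>R B y" if "x \<in> DB" "y \<in> DB" for x y c
  proof -
    have "c *\<^sub>R y \<in> DB" using subB that by (simp only: subspace_scale)
    then show ?thesis using addB sclB that by simp
  qed
  have Bdiff: "B (x - c *\<^sub>R y) = B x - c *\<^sub>R B y" if "x \<in> DB" "y \<in> DB" for x y c
    using Blin[OF that, of "-c"] by simp
  have Adiff: "A (x - c *\<^sub>R y) = A x - c *\<^sub>R A y" if "x \<in> DA" "y \<in> DA" for x y c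
  proof -
    have "x \<in> DB" "y \<in> DB" "B x \<in> DB" "B y \<in> DB" using that DAB by auto
    moreover have "x - c *\<^sub>R y \<in> DA" using subA that by (simp add: subspace_diff subspace_scale)
    ultimately show ?thesis using AB that Bdiff by simp
  qed
  have d: "u t \<in> DA" "u1 t \<in> DA" "u2 t \<in> DA" "\<theta> t \<in> DA" using dom t by auto
  define v where "v = u1 t - \<alpha> *\<^sub>R u t"
  define w where "w = u2 t + \<alpha> *\<^sub>R u1 t"
  define G' where "G' = - (inner (u2 t - \<alpha> *\<^sub>R u1 t) w + inner v (u3 t + \<alpha> *\<^sub>R u2 t))"
  have "((\<lambda>s. u1 s - \<alpha> *\<^sub>R u s) has_vector_derivative (u2 t - \<alpha> *\<^sub>R u1 t)) (at t within {0..})"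
    using du du1 t by (intro has_vector_derivative_diff bounded_linear.has_vector_derivative[OF bounded_linear_scaleR_right]) auto
  moreover have "((\<lambda>s. u2 s + \<alpha> *\<^sub>R u1 s) has_vector_derivative (u3 t + \<alpha> *\<^sub>R u2 t)) (at t within {0..})"
    using du1 du2 t by (intro has_vector_derivative_add bounded_linear.has_vector_derivative[OF bounded_linear_scaleR_right]) auto
  ultimately have dinner: "((\<lambda>s. inner (u1 s - \<alpha> *\<^sub>R u s) (u2 s + \<alpha> *\<^sub>R u1 s)) has_vector_derivative
      (inner v (u3 t + \<alpha> *\<^sub>R u2 t) + inner (u2 t - \<alpha> *\<^sub>R u1 t) w)) (at t within {0..})"
    unfolding v_def w_def by (rule bounded_bilinear.has_vector_derivative[OF bounded_bilinear_inner])
  have "((\<lambda>s. - inner (u1 s - \<alpha> *\<^sub>R u s) (u2 s + \<alpha> *\<^sub>R u1 s)) has_vector_derivative G') (at t within {0..})"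
  proof -
    have "G' = - (inner v (u3 t + \<alpha> *\<^sub>R u2 t) + inner (u2 t - \<alpha> *\<^sub>R u1 t) w)"
      unfolding G'_def by (simp only: add.commute)
    then show ?thesis using has_vector_derivative_minus[OF dinner] by simp
  qed
  then have der: "((\<lambda>s. - inner (u1 s - \<alpha> *\<^sub>R u s) (u2 s + \<alpha> *\<^sub>R u1 s)) has_real_derivative G') (at t within {0..})"
    by (simp add: has_real_derivative_iff_has_vector_derivative)
  define p where "p = B (u1 t)"
  define q where "q = B (u t)"
  define r where "r = B (\<theta> t)"
  have vDA: "v \<in> DA" unfolding v_def using subA d by (simp add: subspace_diff subspace_scale)
  have DB: "u t \<in> DB" "u1 t \<in> DB" "\<theta> t \<in> DB" using d DAB by auto
  have Bv: "B v = p - \<alpha> *\<^sub>R q" unfolding v_def p_def q_def using Bdiff DB by simp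
  have Bsum: "B (u1 t + \<alpha> *\<^sub>R u t) = p + \<alpha> *\<^sub>R q" unfolding p_def q_def using Blin DB by simp
  have e3: "u3 t + \<alpha> *\<^sub>R u2 t = \<eta> *\<^sub>R A (\<theta> t) - \<beta> *\<^sub>R A (u1 t) - \<gamma> *\<^sub>R A (u t)"
    using eq1 t by (simp add: algebra_simps)
  have iv: "inner v (u3 t + \<alpha> *\<^sub>R u2 t) = inner (p - \<alpha> *\<^sub>R q) (\<eta> *\<^sub>R r - \<beta> *\<^sub>R p - \<gamma> *\<^sub>R q)"
    unfolding e3 using IA[OF vDA d(4)] IA[OF vDA d(2)] IA[OF vDA d(1)]
    by (simp add: inner_diff_right Bv p_def q_def r_def)
  have spec: "lam1 * (norm (u1 t))^2 \<le> inner (A (u1 t)) (u1 t)"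
    by (rule spec_lb[OF A_sa A_pos lam1_min(2) d(2)])
  have spec2: "inner (A (u1 t)) (u1 t) = (norm p)^2"
    using IA[OF d(2) d(2)] by (simp add: inner_commute p_def power2_norm_eq_inner)
  define k where "k = (2 * \<gamma> - \<alpha> * \<beta>) / (\<alpha> * \<gamma>)"
  have h1: "0 \<le> (norm (u2 t - \<alpha> *\<^sub>R u1 t))^2" by simp
  have h3: "0 \<le> (norm (q - k *\<^sub>R p))^2" by simp
  show "\<exists>G'. ((\<lambda>s. - inner (u1 s - \<alpha> *\<^sub>R u s) (u2 s + \<alpha> *\<^sub>R u1 s)) has_real_derivative G') (at t within {0..}) \<and>
     G' + \<gamma> / (2 * \<alpha>) * (norm (B (u1 t + \<alpha> *\<^sub>R u t)))\<^sup>2 + 1 / 2 * (norm (u2 t + \<alpha> *\<^sub>R u1 t))\<^sup>2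
       \<le> ((4 * \<gamma>\<^sup>2 + (\<gamma> - \<alpha> * \<beta>)\<^sup>2) / (2 * \<alpha> * \<gamma>) + 2 * \<alpha>\<^sup>2 / lam1) * (norm (B (u1 t)))\<^sup>2
         + \<eta> * inner (B (\<theta> t)) (B (u1 t + \<alpha> *\<^sub>R u t)) - 2 * \<eta> * inner (B (\<theta> t)) (B (u1 t))"
  proof (intro exI conjI, rule der)
    have "G' + \<gamma> / (2 * \<alpha>) * (inner p p + 2 * \<alpha> * inner p q + \<alpha>\<^sup>2 * inner q q)
        + 1 / 2 * (inner (u2 t) (u2 t) + 2 * \<alpha> * inner (u2 t) (u1 t) + \<alpha>\<^sup>2 * inner (u1 t) (u1 t))
     \<le> ((4 * \<gamma>\<^sup>2 + (\<gamma> - \<alpha> * \<beta>)\<^sup>2) / (2 * \<alpha> * \<gamma>) + 2 * \<alpha>\<^sup>2 / lam1) * inner p p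
        + \<eta> * (inner p r + \<alpha> * inner q r) - 2 * \<eta> * inner p r"
    proof (rule final_ineq[OF params(1) params(3) lam1_pos _ _ _ k_def])
      show "0 \<le> inner (u2 t) (u2 t) - 2 * \<alpha> * inner (u2 t) (u1 t) + \<alpha>\<^sup>2 * inner (u1 t) (u1 t)"
        using h1 unfolding power2_norm_eq_inner
        by (simp add: inner_diff_left inner_diff_right inner_commute power2_eq_square algebra_simps)
      show "lam1 * inner (u1 t) (u1 t) \<le> inner p p"
        using spec spec2 by (simp add: power2_norm_eq_inner)
      show "0 \<le> inner q q - 2 * k * inner p q + k\<^sup>2 * inner p p"
        using h3 unfolding power2_norm_eq_inner
        by (simp add: inner_diff_left inner_diff_right inner_commute power2_eq_square algebra_simps)
      show "G' = - (inner (u2 t) (u2 t) - \<alpha>\<^sup>2 * inner (u1 t) (u1 t)) -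
          (\<eta> * (inner p r - \<alpha> * inner q r) - \<beta> * (inner p p - \<alpha> * inner p q) - \<gamma> * (inner p q - \<alpha> * inner q q))"
        unfolding G'_def iv w_def
        by (simp add: inner_diff_left inner_diff_right inner_add_left inner_add_right inner_commute power2_eq_square algebra_simps)
    qed
    then show "G' + \<gamma> / (2 * \<alpha>) * (norm (B (u1 t + \<alpha> *\<^sub>R u t)))\<^sup>2 + 1 / 2 * (norm (u2 t + \<alpha> *\<^sub>R u1 t))\<^sup>2
       \<le> ((4 * \<gamma>\<^sup>2 + (\<gamma> - \<alpha> * \<beta>)\<^sup>2) / (2 * \<alpha> * \<gamma>) + 2 * \<alpha>\<^sup>2 / lam1) * (norm (B (u1 t)))\<^sup>2
         + \<eta> * inner (B (\<theta> t)) (B (u1 t + \<alpha> *\<^sub>R u t)) - 2 * \<eta> * inner (B (\<theta> t)) (B (u1 t))"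
      unfolding Bsum power2_norm_eq_inner p_def[symmetric] r_def[symmetric]
      by (simp add: inner_add_left inner_add_right inner_commute power2_eq_square algebra_simps)
  qed
qed

end
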